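(* Let $P$ be a finite partial IP loop such that $3\mid o_3(P)$, $\#P\equiv 4\pmod 6$ and $\Gamma(P)\subseteq O_2(P)\times O_2(P)$, and let $G(P)$ be its gap graph. Then (a) every vertex of $G(P)$ has even degree, and (b) the number of edges of $G(P)$ is divisible by $3$.
   Context: A partial IP loop is a set $P$ with a partial binary operation $(x,y)\mapsto xy$ defined on a subset $D(P)\subseteq P\times P$ (the domain) such that: (1) there is $1\in P$ with $(1,x),(x,1)\in D(P)$ and $1x=x1=x$ for all $x\in P$; (2) for each $x\in P$ there is a unique $y\in P$, denoted $x^{-1}$, with $(x,y),(y,x)\in D(P)$ and $xy=yx=1$; (3) whenever $(x,y)\in D(P)$, we have $(x^{-1},xy),(xy,y^{-1})\in D(P)$ and $x^{-1}(xy)=y$, $(xy)y^{-1}=x$. The set of gaps is $\Gamma(P)=(P\times P)\setminus D(P)$. $O_2(P)=\{x\in P: (x,x)\in D(P),\ x\ne 1,\ xx=1\}$; $O_3(P)=\{x\in P: (x,x)\in D(P),\ (x,xx)\in D(P),\ x\neq 1,\ x(xx)=1\}$ and $o_3(P)=\#O_3(P)$. When $\Gamma(P)\subseteq O_2(P)\times O_2(P)$ (so $\Gamma(P)$ is irreflexive and symmetric), the gap graph $G(P)$ is the simple undirected graph whose vertices are the $x\in O_2(P)$ with $(x,y)\in\Gamma(P)$ for some $y$, and whose edges are the sets $\{x,y\}$ with $(x,y)\in\Gamma(P)$. *)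

theory Defs
  imports Main
begin

text \<open>A partial IP loop with carrier P, domain D \<subseteq> P \<times> P, partial multiplication m
  (only meaningful on D), and identity e.\<close>

definition ploop_inv :: "'a set \<Rightarrow> ('a \<times> 'a) set \<Rightarrow> ('a \<Rightarrow> 'a \<Rightarrow> 'a) \<Rightarrow> 'a \<Rightarrow> 'a \<Rightarrow> 'a" where
  "ploop_inv P D m e x = (THE y. y \<in> P \<and> (x, y) \<in> D \<and> (y, x) \<in> D \<and> m x y = e \<and> m y x = e)"

definition partial_ip_loop :: "'a set \<Rightarrow> ('a \<times> 'a) set \<Rightarrow> ('a \<Rightarrow> 'a \<Rightarrow> 'a) \<Rightarrow> 'a \<Rightarrow> bool" where
  "partial_ip_loop P D m e \<longleftrightarrow>
     D \<subseteq> P \<times> P \<and>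
     (\<forall>(x, y) \<in> D. m x y \<in> P) \<and>
     e \<in> P \<and>
     (\<forall>x \<in> P. (e, x) \<in> D \<and> (x, e) \<in> D \<and> m e x = x \<and> m x e = x) \<and>
     (\<forall>x \<in> P. \<exists>!y. y \<in> P \<and> (x, y) \<in> D \<and> (y, x) \<in> D \<and> m x y = e \<and> m y x = e) \<and>
     (\<forall>(x, y) \<in> D.
        (ploop_inv P D m e x, m x y) \<in> D \<and> (m x y, ploop_inv P D m e y) \<in> D \<and>
        m (ploop_inv P D m e x) (m x y) = y \<and> m (m x y) (ploop_inv P D m e y) = x)"

definition gaps :: "'a set \<Rightarrow> ('a \<times> 'a) set \<Rightarrow> ('a \<times> 'a) set" where
  "gaps P D = (P \<times> P) - D"

definition O2 :: "'a set \<Rightarrow> ('a \<times> 'a) set \<Rightarrow> ('a \<Rightarrow> 'a \<Rightarrow> 'a) \<Rightarrow> 'a \<Rightarrow> 'a set" where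
  "O2 P D m e = {x \<in> P. (x, x) \<in> D \<and> x \<noteq> e \<and> m x x = e}"

definition O3 :: "'a set \<Rightarrow> ('a \<times> 'a) set \<Rightarrow> ('a \<Rightarrow> 'a \<Rightarrow> 'a) \<Rightarrow> 'a \<Rightarrow> 'a set" where
  "O3 P D m e = {x \<in> P. (x, x) \<in> D \<and> (x, m x x) \<in> D \<and> x \<noteq> e \<and> m x (m x x) = e}"

definition gap_vertices :: "'a set \<Rightarrow> ('a \<times> 'a) set \<Rightarrow> ('a \<Rightarrow> 'a \<Rightarrow> 'a) \<Rightarrow> 'a \<Rightarrow> 'a set" where
  "gap_vertices P D m e = {x \<in> O2 P D m e. \<exists>y. (x, y) \<in> gaps P D}"

definition gap_edges :: "'a set \<Rightarrow> ('a \<times> 'a) set \<Rightarrow> 'a set set" where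
  "gap_edges P D = {{x, y} | x y. (x, y) \<in> gaps P D}"

definition gap_degree :: "'a set \<Rightarrow> ('a \<times> 'a) set \<Rightarrow> 'a \<Rightarrow> nat" where
  "gap_degree P D v = card {E \<in> gap_edges P D. v \<in> E}"

end

theory Submission
  imports Defs
begin

lemma invol_even:
  assumes "finite S" "\<forall>x\<in>S. f x \<in> S \<and> f (f x) = x \<and> f x \<noteq> x"
  shows "even (card S)"
  using assms
proof (induction "card S" arbitrary: S rule: less_induct)
  case less
  show ?case
  proof (cases "S = {}")
    case True then show ?thesis by simp
  next
    case False
    then obtain x where x: "x \<in> S" by blast
    let ?S' = "S - {x, f x}"
    have fx: "f x \<in> S" "f x \<noteq> x" using less.prems x by auto
    have cS: "card S = card ?S' + 2"
    proof -
      have "card ?S' = card S - card {x, f x}"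
        using less.prems(1) x fx by (intro card_Diff_subset) auto
      moreover have "card {x, f x} = 2" using fx by simp
      moreover have "card S \<ge> 2"
        using less.prems(1) x fx card_mono[of S "{x, f x}"] by auto
      ultimately show ?thesis by simp
    qed
    have cl: "\<forall>y\<in>?S'. f y \<in> ?S' \<and> f (f y) = y \<and> f y \<noteq> y"
    proof
      fix y assume y: "y \<in> ?S'"
      have "f y \<noteq> x" using y less.prems(2) by (metis DiffE insertCI)
      moreover have "f y \<noteq> f x" using y less.prems(2) x by (metis DiffE insertCI)
      ultimately show "f y \<in> ?S' \<and> f (f y) = y \<and> f y \<noteq> y" using y less.prems(2) by auto
    qed
    have "even (card ?S')"
      using less.hyps[of ?S'] cS cl less.prems(1) by auto
    then show ?thesis using cS by simp
  qed
qed

lemma triple_mod3: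
  assumes "finite S" "\<forall>x\<in>S. f x \<in> S \<and> f (f (f x)) = x"
  shows "card S mod 3 = card {x\<in>S. f x = x} mod 3"
  using assms
proof (induction "card S" arbitrary: S rule: less_induct)
  case less
  show ?case
  proof (cases "\<forall>x\<in>S. f x = x")
    case True
    then have "{x\<in>S. f x = x} = S" by auto
    then show ?thesis by simp
  next
    case False
    then obtain x where x: "x \<in> S" "f x \<noteq> x" by blast
    let ?O = "{x, f x, f (f x)}"
    let ?S' = "S - ?O"
    have h: "\<And>y. y \<in> S \<Longrightarrow> f y \<in> S \<and> f (f (f y)) = y" using less.prems(2) by auto
    have fx: "f x \<in> S" "f (f x) \<in> S" using h x by auto
    have d1: "f (f x) \<noteq> x" using h[OF x(1)] x(2) by metis
    have d2: "f (f x) \<noteq> f x" using h[OF x(1)] x(2) by metis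
    have cO: "card ?O = 3" using x(2) d1 d2 by auto
    have cS: "card S = card ?S' + 3"
    proof -
      have "card ?S' = card S - card ?O"
        using less.prems(1) x fx by (intro card_Diff_subset) auto
      moreover have "card S \<ge> 3"
        using less.prems(1) x fx card_mono[of S ?O] cO by auto
      ultimately show ?thesis using cO by simp
    qed
    have cl: "\<forall>y\<in>?S'. f y \<in> ?S' \<and> f (f (f y)) = y"
    proof
      fix y assume y: "y \<in> ?S'"
      have yS: "y \<in> S" using y by auto
      have "f y \<noteq> x" using y h[OF yS] by (metis DiffE insertCI)
      moreover have "f y \<noteq> f x" using y h[OF yS] h[OF x(1)] by (metis DiffE insertCI)
      moreover have "f y \<noteq> f (f x)" using y h[OF yS] h[OF x(1)] by (metis DiffE insertCI)
      ultimately show "f y \<in> ?S' \<and> f (f (f y)) = y" using y h[OF yS] by auto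
    qed
    have fixeq: "{y\<in>?S'. f y = y} = {y\<in>S. f y = y}"
      using x(2) d1 d2 h[OF x(1)] by auto
    have "card ?S' mod 3 = card {y\<in>?S'. f y = y} mod 3"
      using less.hyps[of ?S'] cS cl less.prems(1) by auto
    then show ?thesis using cS fixeq by simp
  qed
qed

locale pil =
  fixes P :: "'a set" and D :: "('a \<times> 'a) set" and m :: "'a \<Rightarrow> 'a \<Rightarrow> 'a" and e :: 'a
  assumes L: "partial_ip_loop P D m e"
begin

abbreviation iv where "iv x \<equiv> ploop_inv P D m e x"

lemma DP: "(x,y) \<in> D \<Longrightarrow> x \<in> P \<and> y \<in> P \<and> m x y \<in> P"
  using L unfolding partial_ip_loop_def by auto

lemma eP: "e \<in> P" using L unfolding partial_ip_loop_def by auto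

lemma unit: "x \<in> P \<Longrightarrow> (e, x) \<in> D \<and> (x, e) \<in> D \<and> m e x = x \<and> m x e = x"
  using L unfolding partial_ip_loop_def by auto

lemma ax3: "(x,y) \<in> D \<Longrightarrow> (iv x, m x y) \<in> D \<and> (m x y, iv y) \<in> D \<and>
        m (iv x) (m x y) = y \<and> m (m x y) (iv y) = x"
  using L unfolding partial_ip_loop_def by blast

lemma inv1: "x \<in> P \<Longrightarrow> iv x \<in> P \<and> (x, iv x) \<in> D \<and> (iv x, x) \<in> D \<and> m x (iv x) = e \<and> m (iv x) x = e"
proof -
  assume x: "x \<in> P"
  then have "\<exists>!y. y \<in> P \<and> (x, y) \<in> D \<and> (y, x) \<in> D \<and> m x y = e \<and> m y x = e"
    using L unfolding partial_ip_loop_def by auto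
  from theI'[OF this] show ?thesis unfolding ploop_inv_def .
qed

lemma inv2: "x \<in> P \<Longrightarrow> y \<in> P \<Longrightarrow> (x, y) \<in> D \<Longrightarrow> (y, x) \<in> D \<Longrightarrow> m x y = e \<Longrightarrow> m y x = e \<Longrightarrow> iv x = y"
proof -
  assume a: "x \<in> P" "y \<in> P" "(x, y) \<in> D" "(y, x) \<in> D" "m x y = e" "m y x = e"
  then have "\<exists>!y. y \<in> P \<and> (x, y) \<in> D \<and> (y, x) \<in> D \<and> m x y = e \<and> m y x = e"
    using L unfolding partial_ip_loop_def by auto
  then show ?thesis unfolding ploop_inv_def using a by (intro the1_equality) auto
qed

lemma invinv: "x \<in> P \<Longrightarrow> iv (iv x) = x"
  using inv1[of x] by (intro inv2) auto

lemma inve: "iv e = e" using eP unit[OF eP] by (intro inv2) auto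

lemma O2inv: "x \<in> O2 P D m e \<Longrightarrow> iv x = x"
  unfolding O2_def by (intro inv2) auto

lemma L5: "(x,y) \<in> D \<Longrightarrow> (y, iv (m x y)) \<in> D \<and> m y (iv (m x y)) = iv x"
  using ax3[of x y] ax3[of "iv x" "m x y"] by auto

lemma symO2: "(x,y) \<in> D \<Longrightarrow> x \<in> O2 P D m e \<Longrightarrow> y \<in> O2 P D m e \<Longrightarrow> (y,x) \<in> D"
  using L5[of x y] ax3[of y "iv (m x y)"] O2inv[of x] O2inv[of y] by auto

end

theorem claim3:
  fixes P :: "'a set" and D :: "('a \<times> 'a) set" and m :: "'a \<Rightarrow> 'a \<Rightarrow> 'a" and e :: 'a
  assumes "finite P"
    and "partial_ip_loop P D m e"
    and "3 dvd card (O3 P D m e)"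
    and "card P mod 6 = 4"
    and "gaps P D \<subseteq> O2 P D m e \<times> O2 P D m e"
  shows "(\<forall>v \<in> gap_vertices P D m e. even (gap_degree P D v)) \<and> 3 dvd card (gap_edges P D)"
proof -
  interpret pil P D m e using assms(2) by unfold_locales
  have DPP: "D \<subseteq> P \<times> P" using DP by auto
  have finD: "finite D" using DPP assms(1) finite_subset by blast
  have nEven: "even (card P)" using assms(4) by presburger
  have n3: "card P mod 3 = 1" using assms(4) by presburger
  have gsym: "\<And>x y. (x,y) \<in> gaps P D \<Longrightarrow> (y,x) \<in> gaps P D"
  proof -
    fix x y assume g: "(x,y) \<in> gaps P D"
    then have xy: "x \<in> O2 P D m e" "y \<in> O2 P D m e" using assms(5) by auto
    have "(y,x) \<notin> D" using symO2[of y x] xy g unfolding gaps_def by auto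
    then show "(y,x) \<in> gaps P D" using g unfolding gaps_def by auto
  qed
  have girr: "\<And>x y. (x,y) \<in> gaps P D \<Longrightarrow> x \<noteq> y"
    using assms(5) unfolding gaps_def O2_def by auto
  have partA: "\<forall>v \<in> gap_vertices P D m e. even (gap_degree P D v)"
  proof
    fix v assume v: "v \<in> gap_vertices P D m e"
    then have vO: "v \<in> O2 P D m e" unfolding gap_vertices_def by auto
    then have vP: "v \<in> P" and vv: "(v,v) \<in> D" and vne: "v \<noteq> e" and vm: "m v v = e"
      unfolding O2_def by auto
    have iv: "iv v = v" using O2inv[OF vO] .
    define N where "N = {y. (v,y) \<in> gaps P D}"
    define Dv where "Dv = {y \<in> P. (v,y) \<in> D}"
    have Neq: "N = P - Dv" unfolding N_def Dv_def gaps_def using vP by auto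
    have edges: "{E \<in> gap_edges P D. v \<in> E} = (\<lambda>y. {v,y}) ` N"
    proof (rule set_eqI, rule iffI)
      fix E assume "E \<in> {E \<in> gap_edges P D. v \<in> E}"
      then obtain a b where E: "E = {a,b}" "(a,b) \<in> gaps P D" "v \<in> E"
        unfolding gap_edges_def by auto
      show "E \<in> (\<lambda>y. {v,y}) ` N"
      proof (cases "v = a")
        case True then show ?thesis using E unfolding N_def by auto
      next
        case False then have "v = b" using E by auto
        then show ?thesis using E gsym[OF E(2)] unfolding N_def by auto
      qed
    next
      fix E assume "E \<in> (\<lambda>y. {v,y}) ` N"
      then show "E \<in> {E \<in> gap_edges P D. v \<in> E}" unfolding N_def gap_edges_def by auto
    qed
    have injN: "inj_on (\<lambda>y. {v,y}) N"
    proof (rule inj_onI)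
      fix y y' assume "y \<in> N" "y' \<in> N" "{v,y} = {v,y'}"
      moreover have "y \<noteq> v" "y' \<noteq> v" using \<open>y \<in> N\<close> \<open>y' \<in> N\<close> girr unfolding N_def by auto
      ultimately show "y = y'" by (metis insert_iff doubleton_eq_iff)
    qed
    have deg: "gap_degree P D v = card N"
      unfolding gap_degree_def edges using card_image[OF injN] .
    have finDv: "finite Dv" "Dv \<subseteq> P" using assms(1) unfolding Dv_def by auto
    have evDv: "even (card Dv)"
    proof (rule invol_even[of Dv "m v"])
      show "finite Dv" by fact
      show "\<forall>x\<in>Dv. m v x \<in> Dv \<and> m v (m v x) = x \<and> m v x \<noteq> x"
      proof
        fix y assume y: "y \<in> Dv"
        then have yD: "(v,y) \<in> D" and yP: "y \<in> P" unfolding Dv_def by auto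
        have a: "(v, m v y) \<in> D" "m v (m v y) = y" using ax3[OF yD] iv by auto
        have b: "m v y \<noteq> y"
        proof
          assume "m v y = y"
          then have "m y (iv y) = v" using ax3[OF yD] by auto
          then show False using inv1[OF yP] vne by auto
        qed
        show "m v y \<in> Dv \<and> m v (m v y) = y \<and> m v y \<noteq> y"
          using a b DP[OF yD] unfolding Dv_def by auto
      qed
    qed
    have "card N = card P - card Dv" using Neq finDv assms(1) card_Diff_subset by metis
    moreover have "card Dv \<le> card P" using finDv assms(1) card_mono by metis
    ultimately show "even (gap_degree P D v)" using deg evDv nEven by auto
  qed
  define \<sigma> where "\<sigma> = (\<lambda>(x,y). (y, iv (m x y)))"
  have \<sigma>D: "\<And>p. p \<in> D \<Longrightarrow> \<sigma> p \<in> D"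
    unfolding \<sigma>_def using L5 by auto
  have \<sigma>3: "\<And>p. p \<in> D \<Longrightarrow> \<sigma> (\<sigma> (\<sigma> p)) = p"
  proof -
    fix p assume p: "p \<in> D"
    obtain x y where xy: "p = (x,y)" by fastforce
    have D1: "(x,y) \<in> D" using p xy by simp
    define z where "z = iv (m x y)"
    have D2: "(y,z) \<in> D" "m y z = iv x" using L5[OF D1] unfolding z_def by auto
    have xP: "x \<in> P" "y \<in> P" using DP[OF D1] by auto
    have s2: "\<sigma> (\<sigma> p) = (z, x)" unfolding \<sigma>_def xy using D2 invinv[OF xP(1)] z_def by simp
    have "m z (iv (m y z)) = iv y" using L5[OF D2(1)] by auto
    then have "m z x = iv y" using D2 invinv[OF xP(1)] by simp
    then have "iv (m z x) = y" using invinv[OF xP(2)] by simp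
    moreover have "\<sigma> (z, x) = (x, iv (m z x))" unfolding \<sigma>_def by simp
    ultimately show "\<sigma> (\<sigma> (\<sigma> p)) = p" using s2 xy by simp
  qed
  have fixeq: "{p \<in> D. \<sigma> p = p} = (\<lambda>x. (x,x)) ` insert e (O3 P D m e)"
  proof (rule set_eqI, rule iffI)
    fix p assume "p \<in> {p \<in> D. \<sigma> p = p}"
    then obtain x y where p: "p = (x,y)" "(x,y) \<in> D" "\<sigma> (x,y) = (x,y)"
      by (cases p) auto
    then have yx: "y = x" and ix: "iv (m x x) = x" unfolding \<sigma>_def by auto
    have xP: "x \<in> P" "m x x \<in> P" using DP[OF p(2)] yx by auto
    have "x = e \<or> x \<in> O3 P D m e"
      using inv1[OF xP(2)] ix p(2) yx xP unfolding O3_def by auto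
    then show "p \<in> (\<lambda>x. (x,x)) ` insert e (O3 P D m e)" using p yx by auto
  next
    fix p assume "p \<in> (\<lambda>x. (x,x)) ` insert e (O3 P D m e)"
    then obtain x where p: "p = (x,x)" "x = e \<or> x \<in> O3 P D m e" by auto
    show "p \<in> {p \<in> D. \<sigma> p = p}"
    proof (cases "x = e")
      case True
      then show ?thesis using p unit[OF eP] inve unfolding \<sigma>_def by auto
    next
      case False
      then have O: "x \<in> O3 P D m e" using p by auto
      then have xP: "x \<in> P" and xx: "(x,x) \<in> D" and xw: "(x, m x x) \<in> D" and me: "m x (m x x) = e"
        unfolding O3_def by auto
      have "m (iv x) e = m x x" using ax3[OF xw] me by auto
      then have "iv x = m x x" using unit[of "iv x"] inv1[OF xP] by auto
      then have "iv (m x x) = x" using invinv[OF xP] by simp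
      then show ?thesis using p xx unfolding \<sigma>_def by auto
    qed
  qed
  have eO3: "e \<notin> O3 P D m e" unfolding O3_def by auto
  have finO3: "finite (O3 P D m e)" using assms(1) unfolding O3_def by auto
  have cfix: "card {p \<in> D. \<sigma> p = p} = card (O3 P D m e) + 1"
    unfolding fixeq by (subst card_image) (auto simp: inj_on_def eO3 finO3)
  have cD: "card D mod 3 = 1"
    using triple_mod3[of D \<sigma>] finD \<sigma>D \<sigma>3 cfix assms(3) by auto
  have cG: "card (gaps P D) + card D = card P * card P"
  proof -
    have "card (gaps P D) = card (P \<times> P) - card D"
      unfolding gaps_def using DPP finD card_Diff_subset by metis
    moreover have "card D \<le> card (P \<times> P)"
      using DPP assms(1) by (intro card_mono) auto
    ultimately show ?thesis by (simp add: card_cartesian_product)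
  qed
  have "(card P * card P) mod 3 = 1" using n3 by (simp add: mod_mult_eq[symmetric])
  then have g3: "3 dvd card (gaps P D)" using cG cD by presburger
  have finG: "finite (gaps P D)" using assms(1) unfolding gaps_def by auto
  define f where "f = (\<lambda>p::'a\<times>'a. {fst p, snd p})"
  have Eeq: "gap_edges P D = f ` gaps P D" unfolding gap_edges_def f_def by force
  have Gun: "gaps P D = (\<Union>E\<in>gap_edges P D. {p \<in> gaps P D. f p = E})" unfolding Eeq by auto
  have fib: "\<And>E. E \<in> gap_edges P D \<Longrightarrow> card {p \<in> gaps P D. f p = E} = 2"
  proof -
    fix E assume "E \<in> gap_edges P D"
    then obtain x y where E: "E = {x,y}" "(x,y) \<in> gaps P D" unfolding gap_edges_def by auto
    have ne: "x \<noteq> y" using girr[OF E(2)] .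
    have "{p \<in> gaps P D. f p = E} = {(x,y),(y,x)}"
      using E gsym[OF E(2)] unfolding f_def by (auto simp: doubleton_eq_iff)
    then show "card {p \<in> gaps P D. f p = E} = 2" using ne by auto
  qed
  have finE: "finite (gap_edges P D)" unfolding Eeq using finG by simp
  have "card (gaps P D) = (\<Sum>E\<in>gap_edges P D. card {p \<in> gaps P D. f p = E})"
    by (subst Gun, rule card_UN_disjoint) (use finE finG in auto)
  also have "\<dots> = 2 * card (gap_edges P D)" using fib by simp
  finally have "card (gaps P D) = 2 * card (gap_edges P D)" .
  then have "3 dvd card (gap_edges P D)" using g3 by presburger
  then show ?thesis using partA by simp
qed

end
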